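(* Let $(S,\sqcup,\cap)$ be an ado-semilattice. Then for all $a,b,c\in S$: (1) $a\sqcup b=b\sqcup a$ if and only if $a$ and $b$ have an upper bound in $(S,\leq)$; (2) $a\cap((a\cap b)\sqcup c)=a\cap((a\cap c)\sqcup b)$.
   Context: An o-semilattice is an algebra $(L,\cap,\sqcup)$ such that $(L,\cap)$ is a semilattice and, with $x\leq y$ iff $x=x\cap y$, for all $x,y,z$: (i) $x\leq x\sqcup y$; (ii) $(x\cap y)\sqcup(y\cap z)\leq y$; (iii) $x\sqcup y\leq x\sqcup(y\cap(x\sqcup y))$; (iv) $x\cap z\leq(x\cap y)\sqcup z$. It is distributive if $(a\cap d)\sqcup((b\cap d)\cap(c\cap d))=((a\cap d)\sqcup(b\cap d))\cap((a\cap d)\sqcup(c\cap d))$ for all $a,b,c,d$. An ado-semilattice is a distributive o-semilattice in which $\sqcup$ is associative. Here $\leq$ is the semilattice order $x\leq y$ iff $x=x\cap y$. *)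

theory Defs
  imports Main
begin

definition is_semilattice :: "('a \<Rightarrow> 'a \<Rightarrow> 'a) \<Rightarrow> bool" where
  "is_semilattice m \<longleftrightarrow>
     (\<forall>x y z. m (m x y) z = m x (m y z)) \<and>
     (\<forall>x y. m x y = m y x) \<and>
     (\<forall>x. m x x = x)"

definition sl_le :: "('a \<Rightarrow> 'a \<Rightarrow> 'a) \<Rightarrow> 'a \<Rightarrow> 'a \<Rightarrow> bool" where
  "sl_le m x y \<longleftrightarrow> x = m x y"

definition o_semilattice :: "('a \<Rightarrow> 'a \<Rightarrow> 'a) \<Rightarrow> ('a \<Rightarrow> 'a \<Rightarrow> 'a) \<Rightarrow> bool" where
  "o_semilattice m j \<longleftrightarrow> is_semilattice m \<and>
     (\<forall>x y. sl_le m x (j x y)) \<and>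
     (\<forall>x y z. sl_le m (j (m x y) (m y z)) y) \<and>
     (\<forall>x y. sl_le m (j x y) (j x (m y (j x y)))) \<and>
     (\<forall>x y z. sl_le m (m x z) (j (m x y) z))"

definition distributive_o_semilattice :: "('a \<Rightarrow> 'a \<Rightarrow> 'a) \<Rightarrow> ('a \<Rightarrow> 'a \<Rightarrow> 'a) \<Rightarrow> bool" where
  "distributive_o_semilattice m j \<longleftrightarrow> o_semilattice m j \<and>
     (\<forall>a b c d. j (m a d) (m (m b d) (m c d)) = m (j (m a d) (m b d)) (j (m a d) (m c d)))"

definition ado_semilattice :: "('a \<Rightarrow> 'a \<Rightarrow> 'a) \<Rightarrow> ('a \<Rightarrow> 'a \<Rightarrow> 'a) \<Rightarrow> bool" where
  "ado_semilattice m j \<longleftrightarrow> distributive_o_semilattice m j \<and>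
     (\<forall>x y z. j (j x y) z = j x (j y z))"

end

theory Submission
  imports Defs
begin

locale ado_loc =
  fixes m j :: "'a \<Rightarrow> 'a \<Rightarrow> 'a"
  assumes massoc: "\<And>x y z. m (m x y) z = m x (m y z)"
    and mcomm: "\<And>x y. m x y = m y x"
    and midem: "\<And>x. m x x = x"
    and ax1: "\<And>x y. sl_le m x (j x y)"
    and ax2: "\<And>x y z. sl_le m (j (m x y) (m y z)) y"
    and ax3: "\<And>x y. sl_le m (j x y) (j x (m y (j x y)))"
    and ax4: "\<And>x y z. sl_le m (m x z) (j (m x y) z)"
    and dist: "\<And>a b c d. j (m a d) (m (m b d) (m c d)) = m (j (m a d) (m b d)) (j (m a d) (m c d))"
    and jassoc: "\<And>x y z. j (j x y) z = j x (j y z)"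
begin

abbreviation le (infix "\<sqsubseteq>" 50) where "x \<sqsubseteq> y \<equiv> sl_le m x y"

lemma le_def: "x \<sqsubseteq> y \<longleftrightarrow> x = m x y" by (simp add: sl_le_def)

lemma le_refl: "x \<sqsubseteq> x" by (simp add: le_def midem)
lemma le_antisym: "x \<sqsubseteq> y \<Longrightarrow> y \<sqsubseteq> x \<Longrightarrow> x = y"
  unfolding le_def
proof -
  assume h1: "x = m x y" and h2: "y = m y x"
  have "x = m x y" by (rule h1)
  also have "\<dots> = m y x" by (rule mcomm)
  also have "\<dots> = y" by (rule h2[symmetric])
  finally show "x = y" .
qed
lemma le_trans: "x \<sqsubseteq> y \<Longrightarrow> y \<sqsubseteq> z \<Longrightarrow> x \<sqsubseteq> z"
  unfolding le_def
proof -
  assume h1: "x = m x y" and h2: "y = m y z"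
  have "m x z = m (m x y) z" using h1[symmetric] by simp
  also have "\<dots> = m x (m y z)" by (rule massoc)
  also have "\<dots> = x" using h1[symmetric] h2[symmetric] by simp
  finally show "x = m x z" by (rule sym)
qed
lemma meet_le1: "m x y \<sqsubseteq> x"
  unfolding le_def
proof -
  have "m (m x y) x = m x (m x y)" by (rule mcomm)
  also have "\<dots> = m (m x x) y" by (rule massoc[symmetric])
  also have "\<dots> = m x y" by (simp only: midem)
  finally show "m x y = m (m x y) x" by (rule sym)
qed
lemma meet_le2: "m x y \<sqsubseteq> y"
  unfolding le_def
proof -
  have "m (m x y) y = m x (m y y)" by (rule massoc)
  also have "\<dots> = m x y" by (simp only: midem)
  finally show "m x y = m (m x y) y" by (rule sym)
qed
lemma meet_glb: "z \<sqsubseteq> x \<Longrightarrow> z \<sqsubseteq> y \<Longrightarrow> z \<sqsubseteq> m x y"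
  unfolding le_def
proof -
  assume h1: "z = m z x" and h2: "z = m z y"
  have "m z (m x y) = m (m z x) y" by (rule massoc[symmetric])
  also have "\<dots> = z" using h1[symmetric] h2[symmetric] by simp
  finally show "z = m z (m x y)" by (rule sym)
qed
lemma meet_mono: "x \<sqsubseteq> x' \<Longrightarrow> y \<sqsubseteq> y' \<Longrightarrow> m x y \<sqsubseteq> m x' y'"
proof -
  assume a1: "x \<sqsubseteq> x'" and a2: "y \<sqsubseteq> y'"
  have "m x y \<sqsubseteq> x'" using le_trans[OF meet_le1 a1] .
  moreover have "m x y \<sqsubseteq> y'" using le_trans[OF meet_le2 a2] .
  ultimately show ?thesis by (rule meet_glb)
qed

lemma join_le: "x \<sqsubseteq> d \<Longrightarrow> y \<sqsubseteq> d \<Longrightarrow> j x y \<sqsubseteq> d"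
proof -
  assume h1: "x \<sqsubseteq> d" and h2: "y \<sqsubseteq> d"
  have e1: "m x d = x" using h1 unfolding le_def by (rule sym)
  have e2: "m d y = y" using h2 unfolding le_def by (subst mcomm) (rule sym)
  show ?thesis using ax2[where x=x and y=d and z=y] unfolding e1 e2 .
qed

lemma ub2: "x \<sqsubseteq> u \<Longrightarrow> y \<sqsubseteq> u \<Longrightarrow> y \<sqsubseteq> j x y"
proof -
  assume h1: "x \<sqsubseteq> u" and h2: "y \<sqsubseteq> u"
  have e1: "m u x = x" using h1 unfolding le_def by (subst mcomm) (rule sym)
  have e2: "m u y = y" using h2 unfolding le_def by (subst mcomm) (rule sym)
  show ?thesis using ax4[where x=u and y=x and z=y] unfolding e1 e2 .
qed

lemma lub_comm: "x \<sqsubseteq> u \<Longrightarrow> y \<sqsubseteq> u \<Longrightarrow> j x y = j y x"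
proof -
  assume a1: "x \<sqsubseteq> u" and a2: "y \<sqsubseteq> u"
  have u1: "y \<sqsubseteq> j x y" using ub2[OF a1 a2] .
  have u2: "x \<sqsubseteq> j y x" using ub2[OF a2 a1] .
  have "j x y \<sqsubseteq> j y x" using join_le[OF u2 ax1] .
  moreover have "j y x \<sqsubseteq> j x y" using join_le[OF u1 ax1] .
  ultimately show ?thesis by (rule le_antisym)
qed

lemma absorb1: "y \<sqsubseteq> x \<Longrightarrow> j x y = x"
  using join_le[OF le_refl, of y x] ax1[of x y] le_antisym by blast

lemma absorb2: "y \<sqsubseteq> x \<Longrightarrow> j y x = x"
  using absorb1[of y x] lub_comm[OF _ le_refl, of y x] by simp

lemma jmono: "y \<sqsubseteq> z \<Longrightarrow> j x y \<sqsubseteq> j x z"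
proof -
  assume h: "y \<sqsubseteq> z"
  have e: "j x z = j (j x y) z" using absorb2[OF h] jassoc by simp
  show ?thesis by (subst e) (rule ax1)
qed

lemma dist': "x \<sqsubseteq> d \<Longrightarrow> y \<sqsubseteq> d \<Longrightarrow> z \<sqsubseteq> d \<Longrightarrow> j x (m y z) = m (j x y) (j x z)"
proof -
  assume h1: "x \<sqsubseteq> d" and h2: "y \<sqsubseteq> d" and h3: "z \<sqsubseteq> d"
  have e1: "m x d = x" using h1 unfolding le_def by (rule sym)
  have e2: "m y d = y" using h2 unfolding le_def by (rule sym)
  have e3: "m z d = z" using h3 unfolding le_def by (rule sym)
  show ?thesis using dist[where a=x and d=d and b=y and c=z] unfolding e1 e2 e3 .
qed

lemma key: "m a (j (m a b) c) = j (m a b) (m a c)"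
proof -
  define p where "p = m a b"
  define q where "q = m a c"
  define r where "r = m a (j p c)"
  define D where "D = j p c"
  define c' where "c' = m c D"
  have pa: "p \<sqsubseteq> a" unfolding p_def by (rule meet_le1)
  have qa: "q \<sqsubseteq> a" unfolding q_def by (rule meet_le1)
  have pr: "p \<sqsubseteq> r" unfolding r_def using pa ax1 meet_glb by blast
  have ra: "r \<sqsubseteq> a" unfolding r_def by (rule meet_le1)
  have rD: "r \<sqsubseteq> D" unfolding r_def D_def by (rule meet_le2)
  have pD: "p \<sqsubseteq> D" unfolding D_def by (rule ax1)
  have cD: "c' \<sqsubseteq> D" unfolding c'_def by (rule meet_le2)
  have Deq: "D = j p c'"
    unfolding c'_def D_def by (rule le_antisym[OF ax3 jmono[OF meet_le1]])
  have "j p (m r c') = m (j p r) (j p c')" using dist'[OF pD rD cD] .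
  also have "\<dots> = m r D" unfolding absorb2[OF pr] Deq ..
  also have "\<dots> = r" using rD unfolding le_def by (rule sym)
  finally have r1: "r = j p (m r c')" by (rule sym)
  have "m r c' \<sqsubseteq> q" unfolding q_def c'_def
    using meet_mono[OF ra meet_le1[of c D]] .
  then have "j p (m r c') \<sqsubseteq> j p q" by (rule jmono)
  then have "r \<sqsubseteq> j p q" using r1[symmetric] by simp
  moreover have "j p q \<sqsubseteq> r"
  proof -
    have "j p q \<sqsubseteq> a" using join_le[OF pa qa] .
    moreover have "j p q \<sqsubseteq> j p c" unfolding q_def by (rule jmono[OF meet_le2])
    ultimately show ?thesis unfolding r_def using meet_glb by blast
  qed
  ultimately have "r = j p q" by (rule le_antisym)
  then show ?thesis unfolding r_def p_def q_def D_def .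
qed

lemma part2: "m a (j (m a b) c) = m a (j (m a c) b)"
proof -
  have "m a (j (m a b) c) = j (m a b) (m a c)" by (rule key)
  also have "\<dots> = j (m a c) (m a b)" by (rule lub_comm[OF meet_le1 meet_le1])
  also have "\<dots> = m a (j (m a c) b)" by (rule key[symmetric])
  finally show ?thesis .
qed

lemma part1: "j a b = j b a \<longleftrightarrow> (\<exists>u. a \<sqsubseteq> u \<and> b \<sqsubseteq> u)"
proof
  assume h: "j a b = j b a"
  have "b \<sqsubseteq> j a b" unfolding h by (rule ax1)
  then show "\<exists>u. a \<sqsubseteq> u \<and> b \<sqsubseteq> u" using ax1 by blast
next
  assume "\<exists>u. a \<sqsubseteq> u \<and> b \<sqsubseteq> u"
  then obtain u where "a \<sqsubseteq> u" "b \<sqsubseteq> u" by blast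
  then show "j a b = j b a" by (rule lub_comm)
qed

end

theorem lemma3p4:
  fixes meet join :: "'a \<Rightarrow> 'a \<Rightarrow> 'a"
  assumes "ado_semilattice meet join"
  shows "(\<forall>a b. (join a b = join b a \<longleftrightarrow> (\<exists>u. sl_le meet a u \<and> sl_le meet b u))) \<and>
         (\<forall>a b c. meet a (join (meet a b) c) = meet a (join (meet a c) b))"
proof -
  have ado: "distributive_o_semilattice meet join \<and> (\<forall>x y z. join (join x y) z = join x (join y z))"
    using assms unfolding ado_semilattice_def .
  have dos: "o_semilattice meet join \<and>
     (\<forall>a b c d. join (meet a d) (meet (meet b d) (meet c d)) = meet (join (meet a d) (meet b d)) (join (meet a d) (meet c d)))"
    using conjunct1[OF ado] unfolding distributive_o_semilattice_def .
  have os: "is_semilattice meet \<and>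
     (\<forall>x y. sl_le meet x (join x y)) \<and>
     (\<forall>x y z. sl_le meet (join (meet x y) (meet y z)) y) \<and>
     (\<forall>x y. sl_le meet (join x y) (join x (meet y (join x y)))) \<and>
     (\<forall>x y z. sl_le meet (meet x z) (join (meet x y) z))"
    using conjunct1[OF dos] unfolding o_semilattice_def .
  have sl: "(\<forall>x y z. meet (meet x y) z = meet x (meet y z)) \<and>
     (\<forall>x y. meet x y = meet y x) \<and> (\<forall>x. meet x x = x)"
    using conjunct1[OF os] unfolding is_semilattice_def .
  interpret ado_loc meet join
  proof (unfold_locales)
    show "\<And>x y z. meet (meet x y) z = meet x (meet y z)" by (rule conjunct1[OF sl, rule_format])
    show "\<And>x y. meet x y = meet y x" by (rule conjunct1[OF conjunct2[OF sl], rule_format])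
    show "\<And>x. meet x x = x" by (rule conjunct2[OF conjunct2[OF sl], rule_format])
    show "\<And>x y. sl_le meet x (join x y)" by (rule conjunct1[OF conjunct2[OF os], rule_format])
    show "\<And>x y z. sl_le meet (join (meet x y) (meet y z)) y"
      by (rule conjunct1[OF conjunct2[OF conjunct2[OF os]], rule_format])
    show "\<And>x y. sl_le meet (join x y) (join x (meet y (join x y)))"
      by (rule conjunct1[OF conjunct2[OF conjunct2[OF conjunct2[OF os]]], rule_format])
    show "\<And>x y z. sl_le meet (meet x z) (join (meet x y) z)"
      by (rule conjunct2[OF conjunct2[OF conjunct2[OF conjunct2[OF os]]], rule_format])
    show "\<And>a b c d. join (meet a d) (meet (meet b d) (meet c d)) = meet (join (meet a d) (meet b d)) (join (meet a d) (meet c d))"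
      by (rule conjunct2[OF dos, rule_format])
    show "\<And>x y z. join (join x y) z = join x (join y z)" by (rule conjunct2[OF ado, rule_format])
  qed
  show ?thesis using part1 part2 by blast
qed

end
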